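(* Let $M\in\mathbb{C}^{d\times d}$ be upper Hessenberg, $w\in\mathbb{C}^d$, and ${\mathbf m}_d=\prod_{j=1}^{d-1}M_{j+1,j}$. Assume all eigenvalues $\lambda_1,\dots,\lambda_d$ of $M+we_d^T$ are simple, and let $f$ be analytic on an open set containing the eigenvalues of $M$ and of $M+we_d^T$. Let $\omega(z)=\prod_{i=1}^d(z-\lambda_i)$. Then $$f(M+we_d^T)e_1-f(M)e_1={\mathbf m}_d\sum_{i=1}^d\frac{1}{\omega'(\lambda_i)}f[M,\lambda_i]\,w,$$ and also $$f(M+we_d^T)e_1-f(M)e_1={\mathbf m}_d\,f[M,\lambda_1,\dots,\lambda_d]\,w.$$
   Context: $e_j$ is the $j$th identity column. $f[t,\lambda]=f'(t)$ if $t=\lambda$ and $\frac{f(t)-f(\lambda)}{t-\lambda}$ otherwise. $f[z,\lambda_1,\dots,\lambda_d]$ denotes the divided difference of $f$ of order $d+1$ (on the $d+1$ nodes $z,\lambda_1,\dots,\lambda_d$), extended by continuity/confluence when $z$ coincides with a node. For an analytic function $h$, $h(M)$ is the standard matrix function; in particular $f[M,\lambda_i]$ and $f[M,\lambda_1,\dots,\lambda_d]$ are the matrix functions of $M$ associated with $z\mapsto f[z,\lambda_i]$ and $z\mapsto f[z,\lambda_1,\dots,\lambda_d]$. *)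

theory Defs
  imports "HOL-Complex_Analysis.Complex_Analysis" "Jordan_Normal_Form.Char_Poly"
begin

definition poly_mat :: "complex poly \<Rightarrow> complex mat \<Rightarrow> complex mat" where
  "poly_mat p M = mat (dim_row M) (dim_row M)
     (\<lambda>(i,j). \<Sum>k\<le>degree p. coeff p k * (M ^\<^sub>m k) $$ (i,j))"

text \<open>Standard matrix function h(M) (Hermite interpolation definition, cf. Higham Def. 1.4):
  h(M) = p(M) for any polynomial p interpolating h and its derivatives at each eigenvalue
  up to (algebraic) multiplicity.\<close>
definition mat_fun :: "(complex \<Rightarrow> complex) \<Rightarrow> complex mat \<Rightarrow> complex mat" where
  "mat_fun h M = (SOME A. \<exists>p. (\<forall>l. eigenvalue M l \<longrightarrow>
        (\<forall>j < order l (char_poly M). poly ((pderiv ^^ j) p) l = (deriv ^^ j) h l))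
      \<and> A = poly_mat p M)"

fun divdiff :: "(complex \<Rightarrow> complex) \<Rightarrow> complex list \<Rightarrow> complex" where
  "divdiff f [] = 0"
| "divdiff f [x] = f x"
| "divdiff f (x # y # xs) = (divdiff f (x # xs) - divdiff f (y # xs)) / (x - y)"

definition divdiff_ext :: "(complex \<Rightarrow> complex) \<Rightarrow> complex list \<Rightarrow> complex \<Rightarrow> complex" where
  "divdiff_ext f ls z = (if z \<in> set ls then Lim (at z) (\<lambda>t. divdiff f (t # ls))
                         else divdiff f (z # ls))"

definition divdiff1 :: "(complex \<Rightarrow> complex) \<Rightarrow> complex \<Rightarrow> complex \<Rightarrow> complex" where
  "divdiff1 f l t = (if t = l then deriv f t else (f t - f l) / (t - l))"

definition upper_hessenberg :: "complex mat \<Rightarrow> bool" where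
  "upper_hessenberg M \<longleftrightarrow> (\<forall>i < dim_row M. \<forall>j < dim_col M. j + 1 < i \<longrightarrow> M $$ (i,j) = 0)"

end

theory Submission
  imports Defs "Jordan_Normal_Form.Schur_Decomposition"
begin

hide_const (open) Coset.order

lemma mult_entry:
  assumes "A \<in> carrier_mat n n" "B \<in> carrier_mat n n" "i < n" "j < n"
  shows "(A * B) $$ (i,j) = (\<Sum>l<n. A $$ (i,l) * B $$ (l,j))"
  using assms by (auto simp: scalar_prod_def lessThan_atLeast0 intro!: sum.cong)

lemma pow_mat_Suc_left:
  assumes "M \<in> carrier_mat n n"
  shows "M ^\<^sub>m Suc k = M * M ^\<^sub>m k"
proof (induction k)
  case 0 then show ?case using assms by simp
next
  case (Suc k)
  have "M ^\<^sub>m Suc (Suc k) = (M * M ^\<^sub>m k) * M" using Suc by simp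
  also have "\<dots> = M * (M ^\<^sub>m k * M)" by (rule assoc_mult_mat[of _ n n _ n _ n]) (use assms in auto)
  finally show ?case by simp
qed

lemma poly_mat_bound:
  assumes "degree p \<le> N"
  shows "poly_mat p M = mat (dim_row M) (dim_row M) (\<lambda>(i,j). \<Sum>k\<le>N. coeff p k * (M ^\<^sub>m k) $$ (i,j))"
proof -
  have "(\<Sum>k\<le>degree p. coeff p k * (M ^\<^sub>m k) $$ (i,j)) = (\<Sum>k\<le>N. coeff p k * (M ^\<^sub>m k) $$ (i,j))" for i j
    by (rule sum.mono_neutral_left) (use assms in \<open>auto simp: coeff_eq_0\<close>)
  then show ?thesis unfolding poly_mat_def by simp
qed

lemma poly_mat_dim[simp]: "dim_row (poly_mat p M) = dim_row M" "dim_col (poly_mat p M) = dim_row M"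
  unfolding poly_mat_def by auto

lemma poly_mat_carrier[simp]: "M \<in> carrier_mat n n \<Longrightarrow> poly_mat p M \<in> carrier_mat n n"
  unfolding poly_mat_def by auto

lemma poly_mat_index:
  assumes "M \<in> carrier_mat n n" "i < n" "j < n" "degree p \<le> N"
  shows "poly_mat p M $$ (i,j) = (\<Sum>k\<le>N. coeff p k * (M ^\<^sub>m k) $$ (i,j))"
  using assms poly_mat_bound[OF assms(4), of M] by simp

lemma poly_mat_add:
  assumes "M \<in> carrier_mat n n"
  shows "poly_mat (p + q) M = poly_mat p M + poly_mat q M"
proof (rule eq_matI)
  let ?N = "max (degree p) (degree q)"
  fix i j assume ij: "i < dim_row (poly_mat p M + poly_mat q M)" "j < dim_col (poly_mat p M + poly_mat q M)"
  hence ij: "i < n" "j < n" using assms by auto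
  have d: "degree (p+q) \<le> ?N" by (rule degree_add_le) auto
  show "poly_mat (p + q) M $$ (i, j) = (poly_mat p M + poly_mat q M) $$ (i, j)"
    using ij assms
    by (simp add: poly_mat_index[OF assms ij d] poly_mat_index[OF assms ij, of p ?N]
        poly_mat_index[OF assms ij, of q ?N] sum.distrib algebra_simps)
qed (use assms in auto)

lemma poly_mat_smult:
  assumes "M \<in> carrier_mat n n"
  shows "poly_mat (Polynomial.smult c p) M = c \<cdot>\<^sub>m poly_mat p M"
proof (rule eq_matI)
  fix i j assume ij: "i < dim_row (c \<cdot>\<^sub>m poly_mat p M)" "j < dim_col (c \<cdot>\<^sub>m poly_mat p M)"
  hence ij: "i < n" "j < n" using assms by auto
  show "poly_mat (Polynomial.smult c p) M $$ (i, j) = (c \<cdot>\<^sub>m poly_mat p M) $$ (i, j)"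
    using ij assms
    by (simp add: poly_mat_index[OF assms ij, of "Polynomial.smult c p" "degree p"]
        poly_mat_index[OF assms ij, of p "degree p"] sum_distrib_left algebra_simps)
qed (use assms in auto)

lemma poly_mat_const:
  assumes "M \<in> carrier_mat n n"
  shows "poly_mat [:c:] M = c \<cdot>\<^sub>m 1\<^sub>m n"
  by (rule eq_matI) (use assms in \<open>auto simp: poly_mat_def\<close>)

lemma poly_mat_pCons:
  assumes M: "M \<in> carrier_mat n n"
  shows "poly_mat (pCons a p) M = a \<cdot>\<^sub>m 1\<^sub>m n + M * poly_mat p M"
proof (rule eq_matI)
  fix i j assume ij: "i < dim_row (a \<cdot>\<^sub>m 1\<^sub>m n + M * poly_mat p M)" "j < dim_col (a \<cdot>\<^sub>m 1\<^sub>m n + M * poly_mat p M)"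
  hence ij: "i < n" "j < n" using M by auto
  let ?N = "degree p"
  have d: "degree (pCons a p) \<le> Suc ?N" by (simp add: degree_pCons_le)
  have "poly_mat (pCons a p) M $$ (i,j) = (\<Sum>k\<le>Suc ?N. coeff (pCons a p) k * (M ^\<^sub>m k) $$ (i,j))"
    by (rule poly_mat_index[OF M ij d])
  also have "\<dots> = a * (1\<^sub>m n) $$ (i,j) + (\<Sum>k\<le>?N. coeff p k * (M ^\<^sub>m Suc k) $$ (i,j))"
    by (subst sum.atMost_Suc_shift) (use M in simp)
  also have "(\<Sum>k\<le>?N. coeff p k * (M ^\<^sub>m Suc k) $$ (i,j))
      = (\<Sum>k\<le>?N. coeff p k * (\<Sum>l<n. M $$ (i,l) * (M ^\<^sub>m k) $$ (l,j)))"
    by (rule sum.cong[OF refl], subst pow_mat_Suc_left[OF M], subst mult_entry[OF M _ ij]) (use M in auto)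
  also have "\<dots> = (\<Sum>l<n. M $$ (i,l) * (\<Sum>k\<le>?N. coeff p k * (M ^\<^sub>m k) $$ (l,j)))"
    by (simp add: sum_distrib_left sum_distrib_right algebra_simps sum.swap[of _ "{..?N}"])
  also have "\<dots> = (M * poly_mat p M) $$ (i,j)"
    by (subst mult_entry[OF M _ ij]) (use M poly_mat_index[OF M _ ij(2), of _ p ?N] in auto)
  finally show "poly_mat (pCons a p) M $$ (i, j) = (a \<cdot>\<^sub>m 1\<^sub>m n + M * poly_mat p M) $$ (i, j)"
    using ij M by simp
qed (use M in auto)

lemma poly_mat_zero: "M \<in> carrier_mat n n \<Longrightarrow> poly_mat 0 M = 0\<^sub>m n n"
  unfolding poly_mat_def by (rule eq_matI) auto

lemma poly_mat_mult:
  assumes M: "M \<in> carrier_mat n n"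
  shows "poly_mat (p * q) M = poly_mat p M * poly_mat q M"
proof (induction p)
  case 0
  then show ?case using M by (simp add: poly_mat_zero)
next
  case (pCons a p)
  have "poly_mat (pCons a p * q) M = poly_mat (Polynomial.smult a q + pCons 0 (p * q)) M"
    by simp
  also have "\<dots> = a \<cdot>\<^sub>m poly_mat q M + (0 \<cdot>\<^sub>m 1\<^sub>m n + M * (poly_mat p M * poly_mat q M))"
    by (simp add: poly_mat_add[OF M] poly_mat_smult[OF M] poly_mat_pCons[OF M] pCons.IH)
  also have "\<dots> = (a \<cdot>\<^sub>m 1\<^sub>m n + M * poly_mat p M) * poly_mat q M"
  proof -
    define P where "P = poly_mat p M"
    define Q where "Q = poly_mat q M"
    have PQ: "P \<in> carrier_mat n n" "Q \<in> carrier_mat n n" using M unfolding P_def Q_def by auto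
    have "(a \<cdot>\<^sub>m 1\<^sub>m n + M * P) * Q = (a \<cdot>\<^sub>m 1\<^sub>m n) * Q + (M * P) * Q"
      by (rule add_mult_distrib_mat[of _ n n]) (use M PQ in auto)
    also have "(a \<cdot>\<^sub>m 1\<^sub>m n) * Q = a \<cdot>\<^sub>m Q" using PQ by (simp add: mult_smult_assoc_mat[of _ n n _ n])
    also have "(M * P) * Q = M * (P * Q)" using M PQ by simp
    also have "0 \<cdot>\<^sub>m 1\<^sub>m n + M * (P * Q) = M * (P * Q)" proof -
      have "0 \<cdot>\<^sub>m 1\<^sub>m n = (0\<^sub>m n n :: complex mat)" by (rule eq_matI) auto
      then show ?thesis using M PQ by simp
    qed
    ultimately show ?thesis unfolding P_def[symmetric] Q_def[symmetric] by simp
  qed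
  finally show ?case by (simp add: poly_mat_pCons[OF M])
qed

lemma mult_unit_vec_index:
  fixes X :: "complex mat"
  assumes "X \<in> carrier_mat n n" "i < n" "j < n"
  shows "(X *\<^sub>v unit_vec n j) $ i = X $$ (i,j)"
proof -
  have "(X *\<^sub>v unit_vec n j) $ i = (\<Sum>l\<in>{0..<n}. X $$ (i,l) * (if l = j then 1 else 0))"
    using assms by (auto simp: scalar_prod_def intro!: sum.cong)
  also have "\<dots> = X $$ (i,j)" using assms by (simp add: if_distrib cong: if_cong)
  finally show ?thesis .
qed

lemma mat_zero_by_vecs:
  fixes X :: "complex mat"
  assumes "X \<in> carrier_mat n n" "\<And>v. v \<in> carrier_vec n \<Longrightarrow> X *\<^sub>v v = 0\<^sub>v n"
  shows "X = 0\<^sub>m n n"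
proof (rule eq_matI)
  fix i j assume "i < dim_row (0\<^sub>m n n :: complex mat)" "j < dim_col (0\<^sub>m n n :: complex mat)"
  hence ij: "i < n" "j < n" by auto
  have "X $$ (i,j) = (X *\<^sub>v unit_vec n j) $ i" using mult_unit_vec_index[OF assms(1) ij] by simp
  also have "\<dots> = 0" using assms(2)[of "unit_vec n j"] ij by simp
  finally show "X $$ (i,j) = 0\<^sub>m n n $$ (i,j)" using ij by simp
qed (use assms in auto)

lemma poly_mat_similar:
  assumes wit: "similar_mat_wit M T P Q" and M: "M \<in> carrier_mat n n"
  shows "poly_mat p M = P * poly_mat p T * Q"
proof -
  note w = similar_mat_witD2[OF M wit]
  have T: "T \<in> carrier_mat n n" and PQ: "P \<in> carrier_mat n n" "Q \<in> carrier_mat n n" using w by auto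
  show ?thesis
  proof (induction p)
    case 0
    show ?case using M T PQ by (simp add: poly_mat_zero)
  next
    case (pCons a p)
    define X where "X = poly_mat p T"
    have X: "X \<in> carrier_mat n n" using T unfolding X_def by simp
    have "poly_mat (pCons a p) M = a \<cdot>\<^sub>m 1\<^sub>m n + (P * T * Q) * (P * X * Q)"
      unfolding poly_mat_pCons[OF M] pCons.IH X_def using w(3) by simp
    also have "(P * T * Q) * (P * X * Q) = P * (T * X) * Q"
    proof -
      have "(P * T * Q) * (P * X * Q) = P * T * (Q * P) * X * Q"
        using T X PQ by (simp add: assoc_mult_mat[of _ n n _ n _ n])
      also have "\<dots> = P * (T * X) * Q" using T X PQ w(2) by (simp add: assoc_mult_mat[of _ n n _ n _ n])
      finally show ?thesis .
    qed
    also have "a \<cdot>\<^sub>m 1\<^sub>m n = P * (a \<cdot>\<^sub>m 1\<^sub>m n) * Q"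
    proof -
      have "P * (a \<cdot>\<^sub>m 1\<^sub>m n) = a \<cdot>\<^sub>m P" using PQ by (simp add: mult_smult_distrib[of _ n n _ n])
      then have "P * (a \<cdot>\<^sub>m 1\<^sub>m n) * Q = a \<cdot>\<^sub>m (P * Q)" using PQ by (simp add: mult_smult_assoc_mat[of _ n n _ n])
      then show ?thesis using w(1) by simp
    qed
    also have "P * (a \<cdot>\<^sub>m 1\<^sub>m n) * Q + P * (T * X) * Q = P * (a \<cdot>\<^sub>m 1\<^sub>m n + T * X) * Q"
    proof -
      have "P * (a \<cdot>\<^sub>m 1\<^sub>m n + T * X) = P * (a \<cdot>\<^sub>m 1\<^sub>m n) + P * (T * X)"
        by (rule mult_add_distrib_mat[of _ n n]) (use T X PQ in auto)
      moreover have "(P * (a \<cdot>\<^sub>m 1\<^sub>m n) + P * (T * X)) * Q = P * (a \<cdot>\<^sub>m 1\<^sub>m n) * Q + P * (T * X) * Q"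
        by (rule add_mult_distrib_mat[of _ n n]) (use T X PQ in auto)
      ultimately show ?thesis by simp
    qed
    finally show ?case by (simp add: poly_mat_pCons[OF T] X_def)
  qed
qed

lemma pow_mat_one: "T \<in> carrier_mat n n \<Longrightarrow> T ^\<^sub>m 1 = T"
  by simp

lemma poly_mat_linear_index:
  assumes T: "T \<in> carrier_mat n n" and ij: "i < n" "j < n"
  shows "poly_mat [:-c, 1:] T $$ (i,j) = T $$ (i,j) - (if i = j then c else 0)"
proof -
  have "poly_mat [:-c, 1:] T $$ (i,j) = (\<Sum>k\<le>1. coeff [:-c, 1:] k * (T ^\<^sub>m k) $$ (i,j))"
    by (rule poly_mat_index[OF T ij]) simp
  also have "\<dots> = T $$ (i,j) - (if i = j then c else 0)" using T ij by simp
  finally show ?thesis .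
qed

lemma tri_step:
  fixes v :: "complex vec"
  assumes T: "T \<in> carrier_mat n n" and ut: "upper_triangular T" and k: "k < n"
    and v: "v \<in> carrier_vec n" and supp: "\<And>i. k < i \<Longrightarrow> i < n \<Longrightarrow> v $ i = 0"
    and i: "k \<le> i" "i < n"
  shows "(poly_mat [:- T $$ (k,k), 1:] T *\<^sub>v v) $ i = 0"
proof -
  have "(poly_mat [:- T $$ (k,k), 1:] T *\<^sub>v v) $ i
      = (\<Sum>j\<in>{0..<n}. poly_mat [:- T $$ (k,k), 1:] T $$ (i,j) * v $ j)"
    using T v i by (simp add: scalar_prod_def)
  also have "\<dots> = 0"
  proof (rule sum.neutral, rule ballI)
    fix j assume j: "j \<in> {0..<n}"
    show "poly_mat [:- T $$ (k,k), 1:] T $$ (i,j) * v $ j = 0"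
    proof (cases "k < j")
      case True then show ?thesis using supp j by simp
    next
      case False
      show ?thesis
      proof (cases "j < i")
        case True
        then have "T $$ (i,j) = 0" using ut T i unfolding upper_triangular_def by auto
        then show ?thesis using True j i T by (simp add: poly_mat_linear_index)
      next
        case False2: False
        then have "j = i" "i = k" using False i by auto
        then show ?thesis using j T by (simp add: poly_mat_linear_index)
      qed
    qed
  qed
  finally show ?thesis .
qed

lemma tri_CH_aux:
  fixes v :: "complex vec"
  assumes T: "T \<in> carrier_mat n n" and ut: "upper_triangular T" and len: "length es = n"
    and diag: "\<And>i. i < n \<Longrightarrow> T $$ (i,i) = es ! i"
  shows "k \<le> n \<Longrightarrow> v \<in> carrier_vec n \<Longrightarrow> (\<And>i. k \<le> i \<Longrightarrow> i < n \<Longrightarrow> v $ i = 0) \<Longrightarrow>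
     poly_mat (\<Prod>e\<leftarrow>take k es. [:-e, 1:]) T *\<^sub>v v = 0\<^sub>v n"
proof (induction k arbitrary: v)
  case 0
  have "(1::complex) \<cdot>\<^sub>m 1\<^sub>m n = 1\<^sub>m n" by (rule eq_matI) auto
  then have "poly_mat 1 T = 1\<^sub>m n" using poly_mat_const[OF T, of 1] by (simp add: one_pCons)
  moreover have "v = 0\<^sub>v n" using 0 by (intro eq_vecI) auto
  ultimately show ?case using 0 T by simp
next
  case (Suc k)
  have k: "k < n" using Suc by simp
  have tk: "take (Suc k) es = take k es @ [es ! k]" using len k by (simp add: take_Suc_conv_app_nth)
  define u where "u = poly_mat [:- T $$ (k,k), 1:] T *\<^sub>v v"
  have u: "u \<in> carrier_vec n" unfolding u_def by (rule mult_mat_vec_carrier[of _ n n]) (use T Suc(3) in auto)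
  have usupp: "u $ i = 0" if "k \<le> i" "i < n" for i
    unfolding u_def by (rule tri_step[OF T ut k Suc(3) _ that]) (use Suc(4) in auto)
  have "poly_mat (\<Prod>e\<leftarrow>take (Suc k) es. [:-e, 1:]) T
      = poly_mat (\<Prod>e\<leftarrow>take k es. [:-e, 1:]) T * poly_mat [:- T $$ (k,k), 1:] T"
    unfolding tk diag[OF k] by (simp add: poly_mat_mult[OF T, symmetric] del: mult_pCons_right mult_pCons_left)
  then have "poly_mat (\<Prod>e\<leftarrow>take (Suc k) es. [:-e, 1:]) T *\<^sub>v v
      = poly_mat (\<Prod>e\<leftarrow>take k es. [:-e, 1:]) T *\<^sub>v u"
    unfolding u_def using T Suc(3) by (simp add: assoc_mult_mat_vec[of _ n n _ n])
  also have "\<dots> = 0\<^sub>v n" using Suc.IH[OF _ u usupp] Suc(2) by simp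
  finally show ?case .
qed

lemma tri_CH:
  assumes T: "T \<in> carrier_mat n n" and ut: "upper_triangular T" and len: "length es = n"
    and diag: "\<And>i. i < n \<Longrightarrow> T $$ (i,i) = es ! i"
  shows "poly_mat (\<Prod>e\<leftarrow>es. [:-e, 1:]) T = 0\<^sub>m n n"
proof (rule mat_zero_by_vecs)
  show "poly_mat (\<Prod>e\<leftarrow>es. [:-e, 1:]) T \<in> carrier_mat n n" using T by simp
  fix v :: "complex vec" assume "v \<in> carrier_vec n"
  from tri_CH_aux[OF assms le_refl this] len
  show "poly_mat (\<Prod>e\<leftarrow>es. [:-e, 1:]) T *\<^sub>v v = 0\<^sub>v n" by simp
qed

lemma cayley_hamilton:
  assumes M: "M \<in> carrier_mat n n"
  shows "poly_mat (char_poly M) M = 0\<^sub>m n n"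
proof -
  obtain es where es: "char_poly M = (\<Prod>a\<leftarrow>es. [:- a, 1:])" "length es = n"
    using char_poly_factorized[OF M] by auto
  obtain B P Q where sd: "schur_decomposition M es = (B,P,Q)" by (cases "schur_decomposition M es") auto
  from schur_decomposition[OF M es(1) sd]
  have wit: "similar_mat_wit M B P Q" and ut: "upper_triangular B" and dg: "diag_mat B = es" by auto
  note w = similar_mat_witD2[OF M wit]
  have B: "B \<in> carrier_mat n n" using w by auto
  have diag: "B $$ (i,i) = es ! i" if "i < n" for i
    using dg that B unfolding diag_mat_def by auto
  have "poly_mat (char_poly M) M = P * poly_mat (char_poly M) B * Q"
    by (rule poly_mat_similar[OF wit M])
  also have "poly_mat (char_poly M) B = 0\<^sub>m n n" unfolding es(1) by (rule tri_CH[OF B ut es(2) diag])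
  finally show ?thesis using w by simp
qed

definition interp :: "complex mat \<Rightarrow> (complex \<Rightarrow> complex) \<Rightarrow> complex poly \<Rightarrow> bool" where
  "interp M h p \<longleftrightarrow> (\<forall>l. eigenvalue M l \<longrightarrow>
        (\<forall>j < order l (char_poly M). poly ((pderiv ^^ j) p) l = (deriv ^^ j) h l))"

lemma pderiv_pow_diff: "(pderiv ^^ j) (p - q) = (pderiv ^^ j) p - (pderiv ^^ j) (q :: complex poly)"
  by (induction j) (auto simp: pderiv_diff)

lemma pderiv_pow_add: "(pderiv ^^ j) (p + q) = (pderiv ^^ j) p + (pderiv ^^ j) (q :: complex poly)"
  by (induction j) (auto simp: pderiv_add)

lemma pderiv_pow_smult: "(pderiv ^^ j) (Polynomial.smult c p) = Polynomial.smult c ((pderiv ^^ j) (p :: complex poly))"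
  by (induction j) (auto simp: pderiv_smult)

lemma derivs_zero_order:
  fixes r :: "complex poly"
  shows "(\<And>j. j < m \<Longrightarrow> poly ((pderiv ^^ j) r) l = 0) \<Longrightarrow> r = 0 \<or> m \<le> order l r"
proof (induction m arbitrary: r)
  case 0 then show ?case by simp
next
  case (Suc m)
  have r0: "poly r l = 0" using Suc.prems[of 0] by simp
  have "pderiv r = 0 \<or> m \<le> order l (pderiv r)"
  proof (rule Suc.IH)
    fix j assume "j < m"
    have "(pderiv ^^ j) (pderiv r) = (pderiv ^^ (Suc j)) r" by (simp only: funpow_Suc_right o_def)
    then show "poly ((pderiv ^^ j) (pderiv r)) l = 0" using Suc.prems[of "Suc j"] \<open>j < m\<close> by simp
  qed
  then show ?case
  proof
    assume "pderiv r = 0"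
    then obtain h where "r = [:h:]" using pderiv_iszero by blast
    then show ?thesis using r0 by simp
  next
    assume m: "m \<le> order l (pderiv r)"
    show ?thesis
    proof (cases "r = 0")
      case False
      then show ?thesis using order_pderiv[OF False r0] m by simp
    qed simp
  qed
qed

lemma prod_dvd_by_order:
  fixes r :: "complex poly"
  shows "(\<And>a. r = 0 \<or> order a (\<Prod>e\<leftarrow>es. [:-e, 1:]) \<le> order a r) \<Longrightarrow> (\<Prod>e\<leftarrow>es. [:-e, 1:]) dvd r"
proof (induction es arbitrary: r)
  case Nil then show ?case by simp
next
  case (Cons a es)
  show ?case
  proof (cases "r = 0")
    case False
    have ne: "(\<Prod>e\<leftarrow>es. [:-e, 1:]) \<noteq> 0" by (auto simp: prod_list_zero_iff)
    have oa: "order b (\<Prod>e\<leftarrow>a#es. [:-e, 1:]) = order b [:-a,1:] + order b (\<Prod>e\<leftarrow>es. [:-e, 1:])" for b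
    proof -
      have e: "(\<Prod>e\<leftarrow>a#es. [:-e, 1:]) = [:-a,1:] * (\<Prod>e\<leftarrow>es. [:-e, 1:])" by simp
      have "[:-a,1:] * (\<Prod>e\<leftarrow>es. [:-e, 1:]) \<noteq> 0" using ne no_zero_divisors[of "[:-a,1:]"] by fastforce
      from order_mult[OF this, of b] show ?thesis unfolding e .
    qed
    have "order a [:-a,1:] = 1" using order_power_n_n[of a 1] by simp
    then have "1 \<le> order a r" using Cons.prems[of a] False oa[of a] by simp
    then have "poly r a = 0" using False by (simp add: order_root)
    then obtain r' where r': "r = [:-a,1:] * r'" using poly_eq_0_iff_dvd by (metis dvdE)
    have r'0: "r' \<noteq> 0" using False r' by auto
    have "order b (\<Prod>e\<leftarrow>es. [:-e, 1:]) \<le> order b r'" for b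
      using Cons.prems[of b] False oa[of b] order_mult[of "[:-a,1:]" r' b] r' r'0 by simp
    then have "(\<Prod>e\<leftarrow>es. [:-e, 1:]) dvd r'" using Cons.IH by blast
    then have "[:-a,1:] * (\<Prod>e\<leftarrow>es. [:-e, 1:]) dvd [:-a,1:] * r'" by (rule mult_dvd_mono[OF dvd_refl])
    then show ?thesis using r' by (simp del: mult_pCons_left)
  qed simp
qed

lemma interp_unique_zero:
  assumes M: "M \<in> carrier_mat n n"
    and z: "\<And>l j. eigenvalue M l \<Longrightarrow> j < order l (char_poly M) \<Longrightarrow> poly ((pderiv ^^ j) r) l = 0"
  shows "poly_mat r M = 0\<^sub>m n n"
proof -
  obtain es where es: "char_poly M = (\<Prod>a\<leftarrow>es. [:- a, 1:])" "length es = n"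
    using char_poly_factorized[OF M] by auto
  have cp0: "char_poly M \<noteq> 0" unfolding es(1) by (auto simp: prod_list_zero_iff)
  have "r = 0 \<or> order a (char_poly M) \<le> order a r" for a
  proof (cases "eigenvalue M a")
    case True
    show ?thesis by (rule derivs_zero_order) (use z[OF True] in auto)
  next
    case False
    then have "poly (char_poly M) a \<noteq> 0" using eigenvalue_root_char_poly[OF M] by simp
    from order_0I[OF this] show ?thesis by simp
  qed
  then have "char_poly M dvd r" unfolding es(1) by (rule prod_dvd_by_order)
  then obtain s where s: "r = char_poly M * s" by (rule dvdE)
  show ?thesis unfolding s poly_mat_mult[OF M] cayley_hamilton[OF M] using M by simp
qed

lemma interp_unique:
  assumes M: "M \<in> carrier_mat n n" and "interp M h p" "interp M h q"
  shows "poly_mat p M = poly_mat q M"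
proof -
  have "poly_mat (p - q) M = 0\<^sub>m n n"
    by (rule interp_unique_zero[OF M]) (use assms(2,3) in \<open>auto simp: interp_def pderiv_pow_diff\<close>)
  moreover have "poly_mat p M = poly_mat q M + poly_mat (p - q) M"
    using poly_mat_add[OF M, of q "p - q"] by simp
  ultimately show ?thesis using M by simp
qed

lemma mat_fun_eq:
  assumes M: "M \<in> carrier_mat n n" and ip: "interp M h p"
  shows "mat_fun h M = poly_mat p M"
proof -
  have ex: "\<exists>A. \<exists>p. interp M h p \<and> A = poly_mat p M" using ip by blast
  have "\<exists>p'. interp M h p' \<and> mat_fun h M = poly_mat p' M"
    unfolding mat_fun_def using someI_ex[OF ex] unfolding interp_def by simp
  then obtain p' where "interp M h p'" "mat_fun h M = poly_mat p' M" by blast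
  then show ?thesis using interp_unique[OF M ip] by simp
qed

lemma poly_holo[holomorphic_intros]: "poly p holomorphic_on S"
  unfolding holomorphic_on_def field_differentiable_def
  using poly_DERIV has_field_derivative_at_within by blast

lemma poly_holo'[holomorphic_intros]: "(\<lambda>z. poly p z) holomorphic_on S"
  using poly_holo by (simp add: eta_contract_eq)

lemma higher_deriv_poly: "(deriv ^^ j) (poly p) = poly ((pderiv ^^ j) p)"
proof (induction j)
  case (Suc j)
  have "deriv (poly ((pderiv ^^ j) p)) = poly (pderiv ((pderiv ^^ j) p))"
    by (rule ext, rule DERIV_imp_deriv, rule poly_DERIV)
  then show ?case using Suc by simp
qed simp

lemma higher_deriv_factor_zero:
  fixes a :: complex
  assumes "j < k"
  shows "poly ((pderiv ^^ j) ([:-a,1:]^k * s)) a = 0"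
proof -
  have e: "poly ([:-a,1:]^k * s) = (\<lambda>z. (z - a)^k * poly s z)"
    by (rule ext) (simp add: poly_power)
  have "poly ((pderiv ^^ j) ([:-a,1:]^k * s)) a = (deriv ^^ j) (\<lambda>z. (z - a)^k * poly s z) a"
    by (simp add: higher_deriv_poly[symmetric] e)
  also have "\<dots> = (\<Sum>i = 0..j. of_nat (j choose i) * (deriv ^^ i) (\<lambda>z. (z - a)^k) a * (deriv ^^ (j-i)) (poly s) a)"
    by (rule higher_deriv_mult[of _ UNIV]) (auto intro!: holomorphic_intros)
  also have "\<dots> = 0"
    by (rule sum.neutral) (use assms in \<open>auto simp: higher_deriv_power\<close>)
  finally show ?thesis .
qed

lemma taylor_exists:
  assumes g: "g holomorphic_on S" and S: "open S" and l: "l \<in> S"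
  shows "\<exists>r. \<forall>j<m. poly ((pderiv ^^ j) r) l = (deriv ^^ j) g l"
proof (induction m)
  case 0 then show ?case by simp
next
  case (Suc m)
  then obtain r where r: "\<forall>j<m. poly ((pderiv ^^ j) r) l = (deriv ^^ j) g l" by blast
  define c where "c = ((deriv ^^ m) g l - poly ((pderiv ^^ m) r) l) / fact m"
  define r' where "r' = r + Polynomial.smult c ([:-l,1:]^m * 1)"
  have jm: "poly ((pderiv ^^ m) ([:-l,1:]^m * 1)) l = fact m"
  proof -
    have e: "poly ([:-l,1:]^m * 1) = (\<lambda>z. (z - l)^m)" by (rule ext) (simp add: poly_power)
    show ?thesis unfolding higher_deriv_poly[symmetric] e
      by (simp add: higher_deriv_power pochhammer_fact)
  qed
  have "poly ((pderiv ^^ j) r') l = (deriv ^^ j) g l" if "j < Suc m" for j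
  proof (cases "j < m")
    case True
    then show ?thesis using r higher_deriv_factor_zero[OF True, of l 1]
      by (simp add: r'_def pderiv_pow_add pderiv_pow_smult)
  next
    case False
    then have "j = m" using that by simp
    then show ?thesis using jm
      by (simp add: r'_def pderiv_pow_add pderiv_pow_smult c_def)
  qed
  then show ?case by blast
qed

lemma hermite_exists:
  assumes S: "open S" and h: "h holomorphic_on S"
  shows "finite E \<Longrightarrow> E \<subseteq> S \<Longrightarrow> \<exists>p. \<forall>l\<in>E. \<forall>j<m l. poly ((pderiv ^^ j) p) l = (deriv ^^ j) h l"
proof (induction E rule: finite_induct)
  case empty then show ?case by simp
next
  case (insert l E)
  then obtain p0 where p0: "\<forall>l\<in>E. \<forall>j<m l. poly ((pderiv ^^ j) p0) l = (deriv ^^ j) h l" by auto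
  define Q where "Q = (\<Prod>l'\<in>E. [:-l',1:]^(m l'))"
  define S' where "S' = S - E"
  have S': "open S'" unfolding S'_def using S insert(1) by (simp add: open_Diff finite_imp_closed)
  have lS': "l \<in> S'" using insert unfolding S'_def by auto
  have Qnz: "poly Q z \<noteq> 0" if "z \<in> S'" for z
    using that insert(1) unfolding Q_def S'_def by (auto simp: poly_prod poly_power)
  define g where "g = (\<lambda>z. (h z - poly p0 z) / poly Q z)"
  have hS': "h holomorphic_on S'" using h unfolding S'_def by (rule holomorphic_on_subset) auto
  have g: "g holomorphic_on S'" unfolding g_def
    by (intro holomorphic_intros hS') (use Qnz in auto)
  obtain r where r: "\<forall>j<m l. poly ((pderiv ^^ j) r) l = (deriv ^^ j) g l"
    using taylor_exists[OF g S' lS'] by blast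
  define p where "p = p0 + Q * r"
  have at_l: "poly ((pderiv ^^ j) p) l = (deriv ^^ j) h l" if j: "j < m l" for j
  proof -
    have "poly ((pderiv ^^ j) (Q * r)) l = (deriv ^^ j) (\<lambda>z. poly Q z * poly r z) l"
      by (simp add: higher_deriv_poly[symmetric] poly_mult[abs_def])
    also have "\<dots> = (\<Sum>i = 0..j. of_nat (j choose i) * (deriv ^^ i) (poly Q) l * (deriv ^^ (j-i)) (poly r) l)"
      by (rule higher_deriv_mult[of _ UNIV]) (auto intro!: holomorphic_intros)
    also have "\<dots> = (\<Sum>i = 0..j. of_nat (j choose i) * (deriv ^^ i) (poly Q) l * (deriv ^^ (j-i)) g l)"
      by (rule sum.cong[OF refl]) (use r j in \<open>auto simp: higher_deriv_poly\<close>)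
    also have "\<dots> = (deriv ^^ j) (\<lambda>z. poly Q z * g z) l"
      by (rule higher_deriv_mult[symmetric, OF _ g S' lS']) (auto intro!: holomorphic_intros)
    also have "\<dots> = (deriv ^^ j) (\<lambda>z. h z - poly p0 z) l"
    proof (rule higher_deriv_transform_within_open[OF _ _ S' lS'])
      show "(\<lambda>z. poly Q z * g z) holomorphic_on S'" by (intro holomorphic_intros g)
      show "(\<lambda>z. h z - poly p0 z) holomorphic_on S'" by (intro holomorphic_intros hS')
      fix w assume "w \<in> S'" then show "poly Q w * g w = h w - poly p0 w" using Qnz by (simp add: g_def)
    qed
    also have "\<dots> = (deriv ^^ j) h l - (deriv ^^ j) (poly p0) l"
      by (rule higher_deriv_diff[OF hS' _ S' lS']) (auto intro!: holomorphic_intros)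
    finally show ?thesis unfolding p_def pderiv_pow_add by (simp add: higher_deriv_poly)
  qed
  have at_E: "poly ((pderiv ^^ j) p) l' = (deriv ^^ j) h l'" if l': "l' \<in> E" and j: "j < m l'" for l' j
  proof -
    have "Q = [:-l',1:]^(m l') * (\<Prod>l''\<in>E - {l'}. [:-l'',1:]^(m l''))"
      unfolding Q_def using insert(1) l' by (simp add: prod.remove)
    then have "Q * r = [:-l',1:]^(m l') * ((\<Prod>l''\<in>E - {l'}. [:-l'',1:]^(m l'')) * r)" by (simp add: mult.assoc)
    then have "poly ((pderiv ^^ j) (Q * r)) l' = 0" using higher_deriv_factor_zero[OF j, of l'] by (simp only:)
    then show ?thesis unfolding p_def pderiv_pow_add using p0 l' j by simp
  qed
  show ?case using at_l at_E by blast
qed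

lemma interp_exists:
  assumes M: "M \<in> carrier_mat n n" and S: "open S" and h: "h holomorphic_on S"
    and sp: "{l. eigenvalue M l} \<subseteq> S"
  shows "\<exists>p. interp M h p"
proof -
  obtain es where es: "char_poly M = (\<Prod>a\<leftarrow>es. [:- a, 1:])" "length es = n"
    using char_poly_factorized[OF M] by auto
  have cp0: "char_poly M \<noteq> 0" unfolding es(1) by (auto simp: prod_list_zero_iff)
  have fin: "finite {l. eigenvalue M l}"
    using poly_roots_finite[OF cp0] eigenvalue_root_char_poly[OF M] by simp
  from hermite_exists[OF S h fin sp, of "\<lambda>l. order l (char_poly M)"]
  show ?thesis unfolding interp_def by auto
qed

lemma interp_poly: "interp M (poly p) p"
  unfolding interp_def by (simp add: higher_deriv_poly)

lemma interp_add:
  assumes S: "open S" and sp: "{l. eigenvalue M l} \<subseteq> S"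
    and h1: "h1 holomorphic_on S" and h2: "h2 holomorphic_on S"
    and i1: "interp M h1 p1" and i2: "interp M h2 p2"
  shows "interp M (\<lambda>z. h1 z + h2 z) (p1 + p2)"
  unfolding interp_def
proof (intro allI impI)
  fix l j assume l: "eigenvalue M l" and j: "j < order l (char_poly M)"
  have lS: "l \<in> S" using sp l by auto
  show "poly ((pderiv ^^ j) (p1 + p2)) l = (deriv ^^ j) (\<lambda>z. h1 z + h2 z) l"
    using i1 i2 l j higher_deriv_add[OF h1 h2 S lS, of j]
    by (simp add: interp_def pderiv_pow_add)
qed

lemma interp_cmult:
  assumes S: "open S" and sp: "{l. eigenvalue M l} \<subseteq> S"
    and h: "h holomorphic_on S" and i: "interp M h p"
  shows "interp M (\<lambda>z. c * h z) (Polynomial.smult c p)"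
  unfolding interp_def
proof (intro allI impI)
  fix l j assume l: "eigenvalue M l" and j: "j < order l (char_poly M)"
  have lS: "l \<in> S" using sp l by auto
  show "poly ((pderiv ^^ j) (Polynomial.smult c p)) l = (deriv ^^ j) (\<lambda>z. c * h z) l"
    using i l j higher_deriv_cmult[OF h lS S, of j c]
    by (simp add: interp_def pderiv_pow_smult)
qed

lemma interp_sum:
  assumes S: "open S" and sp: "{l. eigenvalue M l} \<subseteq> S" and fin: "finite I"
    and h: "\<And>i. i \<in> I \<Longrightarrow> h i holomorphic_on S" and ip: "\<And>i. i \<in> I \<Longrightarrow> interp M (h i) (p i)"
  shows "interp M (\<lambda>z. \<Sum>i\<in>I. h i z) (\<Sum>i\<in>I. p i)"
  using fin h ip
proof (induction I rule: finite_induct)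
  case empty
  have "interp M (poly 0) 0" by (rule interp_poly)
  then show ?case by (simp add: poly_0[abs_def])
next
  case (insert i I)
  have hs: "(\<lambda>z. \<Sum>i\<in>I. h i z) holomorphic_on S" using insert by (intro holomorphic_intros) auto
  have "interp M (\<lambda>z. h i z + (\<Sum>i\<in>I. h i z)) (p i + (\<Sum>i\<in>I. p i))"
    by (rule interp_add[OF S sp _ hs]) (use insert in auto)
  then show ?case using insert by simp
qed

lemma interp_mult_poly:
  assumes S: "open S" and sp: "{l. eigenvalue M l} \<subseteq> S"
    and h: "h holomorphic_on S" and i: "interp M h q"
  shows "interp M (\<lambda>z. poly P z * h z) (P * q)"
  unfolding interp_def
proof (intro allI impI)
  fix l j assume l: "eigenvalue M l" and j: "j < order l (char_poly M)"
  have lS: "l \<in> S" using sp l by auto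
  have "poly ((pderiv ^^ j) (P * q)) l = (deriv ^^ j) (\<lambda>z. poly P z * poly q z) l"
    by (simp add: higher_deriv_poly[symmetric] poly_mult[abs_def])
  also have "\<dots> = (\<Sum>i = 0..j. of_nat (j choose i) * (deriv ^^ i) (poly P) l * (deriv ^^ (j-i)) (poly q) l)"
    by (rule higher_deriv_mult[of _ UNIV]) (auto intro!: holomorphic_intros)
  also have "\<dots> = (\<Sum>i = 0..j. of_nat (j choose i) * (deriv ^^ i) (poly P) l * (deriv ^^ (j-i)) h l)"
    by (rule sum.cong[OF refl]) (use i l j in \<open>auto simp: higher_deriv_poly interp_def\<close>)
  also have "\<dots> = (deriv ^^ j) (\<lambda>z. poly P z * h z) l"
    by (rule higher_deriv_mult[symmetric, OF _ h S lS]) (auto intro!: holomorphic_intros)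
  finally show "poly ((pderiv ^^ j) (P * q)) l = (deriv ^^ j) (\<lambda>z. poly P z * h z) l" .
qed

lemma interp_cong:
  assumes S: "open S" and sp: "{l. eigenvalue M l} \<subseteq> S"
    and h: "h holomorphic_on S" and h': "h' holomorphic_on S" and eq: "\<And>z. z \<in> S \<Longrightarrow> h z = h' z"
    and i: "interp M h p"
  shows "interp M h' p"
  unfolding interp_def
proof (intro allI impI)
  fix l j assume l: "eigenvalue M l" and j: "j < order l (char_poly M)"
  have lS: "l \<in> S" using sp l by auto
  show "poly ((pderiv ^^ j) p) l = (deriv ^^ j) h' l"
    using i l j higher_deriv_transform_within_open[OF h h' S lS eq, of j] by (simp add: interp_def)
qed

lemma mult_vec_index:
  fixes X :: "complex mat"
  assumes "X \<in> carrier_mat n n" "v \<in> carrier_vec n" "i < n"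
  shows "(X *\<^sub>v v) $ i = (\<Sum>l<n. X $$ (i,l) * v $ l)"
  using assms by (auto simp: scalar_prod_def lessThan_atLeast0 intro!: sum.cong)

lemma hess_krylov:
  fixes M :: "complex mat"
  assumes M: "M \<in> carrier_mat d d" and H: "upper_hessenberg M"
  shows "k < d \<Longrightarrow> (\<forall>i. k < i \<and> i < d \<longrightarrow> (M ^\<^sub>m k *\<^sub>v unit_vec d 0) $ i = 0)
     \<and> (M ^\<^sub>m k *\<^sub>v unit_vec d 0) $ k = (\<Prod>j<k. M $$ (j + 1, j))"
proof (induction k)
  case 0
  then show ?case using M by auto
next
  case (Suc k)
  define v where "v = M ^\<^sub>m k *\<^sub>v unit_vec d 0"
  have v: "v \<in> carrier_vec d" unfolding v_def by (rule mult_mat_vec_carrier[of _ d d]) (use M in auto)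
  from Suc have IH: "\<And>i. k < i \<Longrightarrow> i < d \<Longrightarrow> v $ i = 0" "v $ k = (\<Prod>j<k. M $$ (j + 1, j))"
    unfolding v_def by auto
  have e: "M ^\<^sub>m Suc k *\<^sub>v unit_vec d 0 = M *\<^sub>v v"
    unfolding v_def pow_mat_Suc_left[OF M] by (rule assoc_mult_mat_vec[of _ d d _ d]) (use M in auto)
  have Mz: "M $$ (i,l) = 0" if "l + 1 < i" "i < d" "l < d" for i l
    using H M that unfolding upper_hessenberg_def by auto
  have hi: "(M *\<^sub>v v) $ i = 0" if "Suc k < i" "i < d" for i
    unfolding mult_vec_index[OF M v that(2)]
  proof (rule sum.neutral, rule ballI)
    fix l assume l: "l \<in> {..<d}"
    show "M $$ (i, l) * v $ l = 0"
    proof (cases "l \<le> k")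
      case True then show ?thesis using Mz[of l i] that l by simp
    next
      case False then show ?thesis using IH(1)[of l] l by simp
    qed
  qed
  have "(M *\<^sub>v v) $ Suc k = (\<Sum>l<d. M $$ (Suc k,l) * v $ l)"
    by (rule mult_vec_index[OF M v]) (use Suc in simp)
  also have "\<dots> = M $$ (Suc k, k) * v $ k"
  proof -
    have "(\<Sum>l<d. M $$ (Suc k,l) * v $ l) = M $$ (Suc k, k) * v $ k + (\<Sum>l\<in>{..<d} - {k}. M $$ (Suc k,l) * v $ l)"
      by (rule sum.remove) (use Suc in auto)
    also have "(\<Sum>l\<in>{..<d} - {k}. M $$ (Suc k,l) * v $ l) = 0"
    proof (rule sum.neutral, rule ballI)
      fix l assume l: "l \<in> {..<d} - {k}"
      show "M $$ (Suc k, l) * v $ l = 0"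
      proof (cases "l < k")
        case True then show ?thesis using Mz[of l "Suc k"] Suc l by simp
      next
        case False then show ?thesis using IH(1)[of l] l by simp
      qed
    qed
    finally show ?thesis by simp
  qed
  finally have "(M *\<^sub>v v) $ Suc k = (\<Prod>j<Suc k. M $$ (j + 1, j))" using IH(2) by (simp add: mult.commute)
  then show ?case using hi e by simp
qed

lemma A_mult_vec:
  fixes M A :: "complex mat" and w :: "complex vec"
  assumes M: "M \<in> carrier_mat d d" and w: "w \<in> carrier_vec d" and 
    A: "A = M + mat d d (\<lambda>(i,j). if j = d - 1 then w $ i else 0)" and v: "v \<in> carrier_vec d" and d: "0 < d"
  shows "A *\<^sub>v v = M *\<^sub>v v + (v $ (d - 1)) \<cdot>\<^sub>v w"
proof (rule eq_vecI)
  have Ac: "A \<in> carrier_mat d d" using A M by auto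
  fix i assume "i < dim_vec (M *\<^sub>v v + (v $ (d - 1)) \<cdot>\<^sub>v w)"
  then have i: "i < d" using w by simp
  have "(A *\<^sub>v v) $ i = (\<Sum>l<d. A $$ (i,l) * v $ l)" by (rule mult_vec_index[OF Ac v i])
  also have "\<dots> = (\<Sum>l<d. M $$ (i,l) * v $ l) + (\<Sum>l<d. (if l = d - 1 then w $ i else 0) * v $ l)"
    using A M i by (simp add: sum.distrib algebra_simps)
  also have "(\<Sum>l<d. (if l = d - 1 then w $ i else 0) * v $ l) = (\<Sum>l<d. if l = d - 1 then w $ i * v $ (d - 1) else 0)"
    by (rule sum.cong) auto
  also have "\<dots> = w $ i * v $ (d - 1)" using d by simp
  finally show "(A *\<^sub>v v) $ i = (M *\<^sub>v v + (v $ (d - 1)) \<cdot>\<^sub>v w) $ i"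
    using i M w v by (simp add: mult_vec_index[OF M v i] mult.commute)
qed (use A M w in auto)

lemma add_zero_smult_vec:
  fixes x w :: "complex vec"
  shows "x \<in> carrier_vec d \<Longrightarrow> w \<in> carrier_vec d \<Longrightarrow> x + 0 \<cdot>\<^sub>v w = x"
  by (rule eq_vecI) auto

lemma krylov_A:
  fixes M A :: "complex mat" and w :: "complex vec"
  assumes M: "M \<in> carrier_mat d d" and H: "upper_hessenberg M" and w: "w \<in> carrier_vec d" and 
    A: "A = M + mat d d (\<lambda>(i,j). if j = d - 1 then w $ i else 0)" and d: "0 < d"
  shows "k < d \<Longrightarrow> A ^\<^sub>m k *\<^sub>v unit_vec d 0 = M ^\<^sub>m k *\<^sub>v unit_vec d 0"
proof (induction k)
  case 0 then show ?case using A M by simp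
next
  case (Suc k)
  have Ac: "A \<in> carrier_mat d d" using A M by auto
  define v where "v = M ^\<^sub>m k *\<^sub>v unit_vec d 0"
  have v: "v \<in> carrier_vec d" unfolding v_def by (rule mult_mat_vec_carrier[of _ d d]) (use M in auto)
  have "A ^\<^sub>m Suc k *\<^sub>v unit_vec d 0 = A *\<^sub>v (A ^\<^sub>m k *\<^sub>v unit_vec d 0)"
    unfolding pow_mat_Suc_left[OF Ac] by (rule assoc_mult_mat_vec[of _ d d _ d]) (use Ac in auto)
  also have "\<dots> = A *\<^sub>v v" using Suc unfolding v_def by simp
  also have "\<dots> = M *\<^sub>v v + (v $ (d - 1)) \<cdot>\<^sub>v w" by (rule A_mult_vec[OF M w A v d])
  also have "v $ (d - 1) = 0" using hess_krylov[OF M H, of k] Suc(2) unfolding v_def by auto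
  also have "M *\<^sub>v v = M ^\<^sub>m Suc k *\<^sub>v unit_vec d 0"
    unfolding v_def pow_mat_Suc_left[OF M] by (rule assoc_mult_mat_vec[symmetric, of _ d d _ d]) (use M in auto)
  finally have "A ^\<^sub>m Suc k *\<^sub>v unit_vec d 0 = M ^\<^sub>m Suc k *\<^sub>v unit_vec d 0 + 0 \<cdot>\<^sub>v w" .
  moreover have c: "M ^\<^sub>m Suc k *\<^sub>v unit_vec d 0 \<in> carrier_vec d"
    by (rule mult_mat_vec_carrier[of _ d d]) (use M in auto)
  ultimately show ?case using add_zero_smult_vec[OF c w] by (simp only:)
qed

lemma krylov_A_d:
  fixes M A :: "complex mat" and w :: "complex vec"
  assumes M: "M \<in> carrier_mat d d" and H: "upper_hessenberg M" and w: "w \<in> carrier_vec d" and 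
    A: "A = M + mat d d (\<lambda>(i,j). if j = d - 1 then w $ i else 0)" and d: "0 < d"
  shows "A ^\<^sub>m d *\<^sub>v unit_vec d 0 = M ^\<^sub>m d *\<^sub>v unit_vec d 0 + (\<Prod>j<d - 1. M $$ (j + 1, j)) \<cdot>\<^sub>v w"
proof -
  have Ac: "A \<in> carrier_mat d d" using A M by auto
  define v where "v = M ^\<^sub>m (d - 1) *\<^sub>v unit_vec d 0"
  have v: "v \<in> carrier_vec d" unfolding v_def by (rule mult_mat_vec_carrier[of _ d d]) (use M in auto)
  have dd: "d = Suc (d - 1)" using d by simp
  have "A ^\<^sub>m d *\<^sub>v unit_vec d 0 = A *\<^sub>v (A ^\<^sub>m (d - 1) *\<^sub>v unit_vec d 0)"
    by (subst dd, unfold pow_mat_Suc_left[OF Ac], rule assoc_mult_mat_vec[of _ d d _ d]) (use Ac in auto)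
  also have "\<dots> = A *\<^sub>v v" using krylov_A[OF assms, of "d - 1"] d unfolding v_def by simp
  also have "\<dots> = M *\<^sub>v v + (v $ (d - 1)) \<cdot>\<^sub>v w" by (rule A_mult_vec[OF M w A v d])
  also have "v $ (d - 1) = (\<Prod>j<d - 1. M $$ (j + 1, j))" using hess_krylov[OF M H, of "d - 1"] d unfolding v_def by auto
  also have "M *\<^sub>v v = M ^\<^sub>m d *\<^sub>v unit_vec d 0"
    unfolding v_def by (subst (2) dd, unfold pow_mat_Suc_left[OF M], rule assoc_mult_mat_vec[symmetric, of _ d d _ d]) (use M in auto)
  finally show ?thesis .
qed

lemma poly_mat_A_e0:
  fixes M A :: "complex mat" and w :: "complex vec"
  assumes M: "M \<in> carrier_mat d d" and H: "upper_hessenberg M" and w: "w \<in> carrier_vec d" and 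
    A: "A = M + mat d d (\<lambda>(i,j). if j = d - 1 then w $ i else 0)" and d: "0 < d" and deg: "degree p \<le> d"
  shows "poly_mat p A *\<^sub>v unit_vec d 0 = poly_mat p M *\<^sub>v unit_vec d 0
     + (coeff p d * (\<Prod>j<d - 1. M $$ (j + 1, j))) \<cdot>\<^sub>v w"
proof (rule eq_vecI)
  have Ac: "A \<in> carrier_mat d d" using A M by auto
  let ?md = "\<Prod>j<d - 1. M $$ (j + 1, j)"
  fix i assume "i < dim_vec (poly_mat p M *\<^sub>v unit_vec d 0 + (coeff p d * ?md) \<cdot>\<^sub>v w)"
  then have i: "i < d" using w by simp
  have d0: "0 < d" by fact
  have pw: "(X ^\<^sub>m k) $$ (i,0) = (X ^\<^sub>m k *\<^sub>v unit_vec d 0) $ i" if "X \<in> carrier_mat d d" for X :: "complex mat" and k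
    using mult_unit_vec_index[OF pow_carrier_mat[OF that] i d0] by simp
  have "(poly_mat p A *\<^sub>v unit_vec d 0) $ i = (\<Sum>k\<le>d. coeff p k * (A ^\<^sub>m k *\<^sub>v unit_vec d 0) $ i)"
    unfolding mult_unit_vec_index[OF poly_mat_carrier[OF Ac] i d0] poly_mat_index[OF Ac i d0 deg]
    using pw[OF Ac] by simp
  also have "\<dots> = (\<Sum>k<d. coeff p k * (M ^\<^sub>m k *\<^sub>v unit_vec d 0) $ i)
      + coeff p d * ((M ^\<^sub>m d *\<^sub>v unit_vec d 0) $ i + ?md * w $ i)"
    unfolding lessThan_Suc_atMost[symmetric] sum.lessThan_Suc krylov_A_d[OF assms(1-5)]
    using krylov_A[OF assms(1-5)] i M w by simp
  also have "\<dots> = (\<Sum>k\<le>d. coeff p k * (M ^\<^sub>m k *\<^sub>v unit_vec d 0) $ i) + coeff p d * ?md * w $ i"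
    unfolding lessThan_Suc_atMost[symmetric] sum.lessThan_Suc by (simp add: algebra_simps)
  also have "(\<Sum>k\<le>d. coeff p k * (M ^\<^sub>m k *\<^sub>v unit_vec d 0) $ i) = (poly_mat p M *\<^sub>v unit_vec d 0) $ i"
    unfolding mult_unit_vec_index[OF poly_mat_carrier[OF M] i d0] poly_mat_index[OF M i d0 deg]
    using pw[OF M] by simp
  finally show "(poly_mat p A *\<^sub>v unit_vec d 0) $ i = (poly_mat p M *\<^sub>v unit_vec d 0 + (coeff p d * ?md) \<cdot>\<^sub>v w) $ i"
    using i M w by simp
qed (use A M w in auto)


definition EE :: "(complex \<Rightarrow> complex) \<Rightarrow> complex set \<Rightarrow> complex" where
  "EE f B = (\<Sum>x\<in>B. f x / (\<Prod>y\<in>B - {x}. x - y))"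

lemma EE_insert:
  assumes "finite B" "u \<notin> B"
  shows "EE f (insert u B) = f u / (\<Prod>b\<in>B. u - b) + (\<Sum>b\<in>B. f b / ((b - u) * (\<Prod>y\<in>B - {b}. b - y)))"
proof -
  have "EE f (insert u B) = f u / (\<Prod>y\<in>insert u B - {u}. u - y) + (\<Sum>x\<in>B. f x / (\<Prod>y\<in>insert u B - {x}. x - y))"
    unfolding EE_def using assms by simp
  also have "insert u B - {u} = B" using assms by auto
  also have "(\<Sum>x\<in>B. f x / (\<Prod>y\<in>insert u B - {x}. x - y)) = (\<Sum>b\<in>B. f b / ((b - u) * (\<Prod>y\<in>B - {b}. b - y)))"
  proof (rule sum.cong[OF refl])
    fix x assume x: "x \<in> B"
    have "insert u B - {x} = insert u (B - {x})" using x assms by auto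
    then show "f x / (\<Prod>y\<in>insert u B - {x}. x - y) = f x / ((x - u) * (\<Prod>y\<in>B - {x}. x - y))"
      using assms by simp
  qed
  finally show ?thesis .
qed

lemma divdiff_EE: "distinct xs \<Longrightarrow> divdiff f xs = EE f (set xs)"
proof (induction f xs rule: divdiff.induct)
  case (1 f) then show ?case by (simp add: EE_def)
next
  case (2 f x) then show ?case by (simp add: EE_def)
next
  case (3 f x y xs)
  define B where "B = set xs"
  have fin: "finite B" unfolding B_def by simp
  have xy: "x \<noteq> y" "x \<notin> B" "y \<notin> B" using 3(3) unfolding B_def by auto
  have IH1: "divdiff f (x # xs) = EE f (insert x B)" using 3 unfolding B_def by simp
  have IH2: "divdiff f (y # xs) = EE f (insert y B)" using 3 unfolding B_def by simp
  define \<pi> where "\<pi> u = (\<Prod>b\<in>B. u - b)" for u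
  define \<rho> where "\<rho> b = (\<Prod>y\<in>B - {b}. b - y)" for b
  have \<pi>nz: "\<pi> u \<noteq> 0" if "u \<notin> B" for u unfolding \<pi>_def using fin that by auto
  have \<rho>nz: "\<rho> b \<noteq> 0" for b unfolding \<rho>_def using fin by auto
  have E1: "EE f (insert x B) = f x / \<pi> x + (\<Sum>b\<in>B. f b / ((b - x) * \<rho> b))"
    unfolding \<pi>_def \<rho>_def by (rule EE_insert[OF fin xy(2)])
  have E2: "EE f (insert y B) = f y / \<pi> y + (\<Sum>b\<in>B. f b / ((b - y) * \<rho> b))"
    unfolding \<pi>_def \<rho>_def by (rule EE_insert[OF fin xy(3)])
  have fin2: "finite (insert y B)" "x \<notin> insert y B" using fin xy by auto
  have E3: "EE f (insert x (insert y B)) = f x / ((x - y) * \<pi> x) + (f y / ((y - x) * \<pi> y)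
      + (\<Sum>b\<in>B. f b / ((b - x) * ((b - y) * \<rho> b))))"
  proof -
    have "EE f (insert x (insert y B)) = f x / (\<Prod>b\<in>insert y B. x - b)
        + (\<Sum>b\<in>insert y B. f b / ((b - x) * (\<Prod>z\<in>insert y B - {b}. b - z)))"
      by (rule EE_insert[OF fin2])
    also have "(\<Prod>b\<in>insert y B. x - b) = (x - y) * \<pi> x" unfolding \<pi>_def using fin xy by simp
    also have "(\<Sum>b\<in>insert y B. f b / ((b - x) * (\<Prod>z\<in>insert y B - {b}. b - z)))
        = f y / ((y - x) * \<pi> y) + (\<Sum>b\<in>B. f b / ((b - x) * ((b - y) * \<rho> b)))"
    proof -
      have "insert y B - {y} = B" using xy by auto
      moreover have "(\<Prod>z\<in>insert y B - {b}. b - z) = (b - y) * \<rho> b" if "b \<in> B" for b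
      proof -
        have "insert y B - {b} = insert y (B - {b})" using that xy by auto
        then show ?thesis unfolding \<rho>_def using fin xy by simp
      qed
      ultimately show ?thesis using fin xy unfolding \<pi>_def by simp
    qed
    finally show ?thesis .
  qed
  have "divdiff f (x # y # xs) = (EE f (insert x B) - EE f (insert y B)) / (x - y)"
    using IH1 IH2 by simp
  also have "\<dots> = (f x / \<pi> x - f y / \<pi> y) / (x - y)
      + (\<Sum>b\<in>B. (f b / ((b - x) * \<rho> b) - f b / ((b - y) * \<rho> b)) / (x - y))"
  proof -
    have g: "(a + s - (b + t)) / (z::complex) = (a - b) / z + (s - t) / z" for a s b t z
      by (simp add: diff_divide_distrib add_divide_distrib)
    show ?thesis unfolding E1 E2 g sum_subtractf[symmetric] sum_divide_distrib ..
  qed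
  also have "\<dots> = EE f (insert x (insert y B))"
  proof -
    have "(\<Sum>b\<in>B. (f b / ((b - x) * \<rho> b) - f b / ((b - y) * \<rho> b)) / (x - y))
        = (\<Sum>b\<in>B. f b / ((b - x) * ((b - y) * \<rho> b)))"
    proof (rule sum.cong[OF refl])
      fix b assume b: "b \<in> B"
      have "b - x \<noteq> 0" "b - y \<noteq> 0" "x - y \<noteq> 0" using b xy by auto
      then show "(f b / ((b - x) * \<rho> b) - f b / ((b - y) * \<rho> b)) / (x - y) = f b / ((b - x) * ((b - y) * \<rho> b))"
        using \<rho>nz[of b] by (simp add: divide_simps, simp add: algebra_simps)
    qed
    moreover have "(f x / \<pi> x - f y / \<pi> y) / (x - y) = f x / ((x - y) * \<pi> x) + f y / ((y - x) * \<pi> y)"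
    proof -
      have "x - y \<noteq> 0" "y - x \<noteq> 0" using xy by auto
      then show ?thesis using \<pi>nz[OF xy(2)] \<pi>nz[OF xy(3)] by (simp add: divide_simps, simp add: algebra_simps)
    qed
    ultimately show ?thesis unfolding E3 by simp
  qed
  finally show ?case unfolding B_def by simp
qed

definition WW :: "complex set \<Rightarrow> complex \<Rightarrow> complex" where
  "WW L c = (\<Prod>b\<in>L - {c}. c - b)"
definition Pp :: "complex set \<Rightarrow> complex \<Rightarrow> complex poly" where
  "Pp L c = (\<Prod>b\<in>L - {c}. [:-b, 1:])"
definition Om :: "complex set \<Rightarrow> complex poly" where
  "Om L = (\<Prod>b\<in>L. [:-b, 1:])"
definition GG :: "(complex \<Rightarrow> complex) \<Rightarrow> complex set \<Rightarrow> complex \<Rightarrow> complex" where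
  "GG f L z = (\<Sum>c\<in>L. divdiff1 f c z / WW L c)"
definition Pl :: "(complex \<Rightarrow> complex) \<Rightarrow> complex set \<Rightarrow> complex poly" where
  "Pl f L = (\<Sum>c\<in>L. Polynomial.smult (f c / WW L c) (Pp L c))"

lemma poly_Pp: "finite L \<Longrightarrow> poly (Pp L c) z = (\<Prod>b\<in>L - {c}. z - b)"
  unfolding Pp_def by (simp add: poly_prod)

lemma poly_Om: "finite L \<Longrightarrow> poly (Om L) z = (\<Prod>b\<in>L. z - b)"
  unfolding Om_def by (simp add: poly_prod)

lemma Om_split: "finite L \<Longrightarrow> c \<in> L \<Longrightarrow> Om L = [:-c, 1:] * Pp L c"
  unfolding Om_def Pp_def by (simp add: prod.remove)

lemma poly_Om_split: "finite L \<Longrightarrow> c \<in> L \<Longrightarrow> poly (Om L) z = (z - c) * poly (Pp L c) z"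
  by (simp add: Om_split algebra_simps)

lemma WW_nz: "finite L \<Longrightarrow> WW L c \<noteq> 0"
  unfolding WW_def by auto

lemma poly_Pp_self: "finite L \<Longrightarrow> poly (Pp L c) c = WW L c"
  by (simp add: poly_Pp WW_def)

lemma poly_Pp_other: "finite L \<Longrightarrow> c \<in> L \<Longrightarrow> c' \<in> L \<Longrightarrow> c \<noteq> c' \<Longrightarrow> poly (Pp L c) c' = 0"
  by (auto simp: poly_Pp)

lemma degree_Pp: "finite L \<Longrightarrow> degree (Pp L c) = card (L - {c})"
  unfolding Pp_def by (subst degree_prod_sum_eq) auto

lemma degree_Om: "finite L \<Longrightarrow> degree (Om L) = card L"
  unfolding Om_def by (subst degree_prod_sum_eq) auto

lemma coeff_Om: "finite L \<Longrightarrow> coeff (Om L) (card L) = 1"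
  using degree_Om[of L] lead_coeff_prod[of "\<lambda>b. [:-b, 1:]" L] unfolding Om_def by simp

lemma partition_unity:
  assumes fin: "finite L" and ne: "L \<noteq> {}"
  shows "(\<Sum>c\<in>L. poly (Pp L c) z / WW L c) = 1"
proof -
  define U where "U = (\<Sum>c\<in>L. Polynomial.smult (1 / WW L c) (Pp L c))"
  have pU: "poly U z = (\<Sum>c\<in>L. poly (Pp L c) z / WW L c)" for z
    unfolding U_def by (simp add: poly_sum)
  have cardpos: "card L > 0" using fin ne by (simp add: card_gt_0_iff)
  have "U = 1"
  proof (rule poly_eqI_degree[of L])
    fix x assume x: "x \<in> L"
    have "poly U x = poly (Pp L x) x / WW L x + (\<Sum>c\<in>L - {x}. poly (Pp L c) x / WW L c)"
      unfolding pU using sum.remove[OF fin x] by simp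
    also have "(\<Sum>c\<in>L - {x}. poly (Pp L c) x / WW L c) = 0"
      by (rule sum.neutral) (use fin x poly_Pp_other[OF fin _ x] in auto)
    finally show "poly U x = poly 1 x" using poly_Pp_self[OF fin] WW_nz[OF fin] by simp
  next
    have "degree U \<le> card L - 1" unfolding U_def
    proof (rule degree_sum_le[OF fin])
      fix c assume c: "c \<in> L"
      have "degree (Polynomial.smult (1 / WW L c) (Pp L c)) \<le> degree (Pp L c)" by (rule degree_smult_le)
      also have "\<dots> = card L - 1" using degree_Pp[OF fin] c fin by (simp add: card_Diff_singleton)
      finally show "degree (Polynomial.smult (1 / WW L c) (Pp L c)) \<le> card L - 1" .
    qed
    then show "degree U < card L" using cardpos by simp
  qed (use cardpos in simp)
  then show ?thesis using pU[of z] by simp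
qed

lemma deriv_poly_Om:
  assumes fin: "finite L" and c: "c \<in> L"
  shows "deriv (poly (Om L)) c = WW L c"
proof -
  have "deriv (poly (Om L)) c = poly (pderiv (Om L)) c" by (rule DERIV_imp_deriv, rule poly_DERIV)
  also have "\<dots> = WW L c" unfolding Om_split[OF fin c] pderiv_mult
    by (simp add: pderiv_pCons poly_Pp_self[OF fin])
  finally show ?thesis .
qed

lemma Om_divdiff1:
  assumes fin: "finite L" and c: "c \<in> L"
  shows "poly (Om L) z * divdiff1 f c z = (f z - f c) * poly (Pp L c) z"
proof (cases "z = c")
  case True then show ?thesis by (simp add: poly_Om_split[OF fin c])
next
  case False then show ?thesis by (simp add: poly_Om_split[OF fin c] divdiff1_def)
qed

lemma key_identity:
  assumes fin: "finite L" and ne: "L \<noteq> {}"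
  shows "f z = poly (Pl f L) z + poly (Om L) z * GG f L z"
proof -
  have "poly (Om L) z * GG f L z = (\<Sum>c\<in>L. (f z - f c) * poly (Pp L c) z / WW L c)"
    unfolding GG_def sum_distrib_left using Om_divdiff1[OF fin, of _ z f]
    by (intro sum.cong) (auto simp: times_divide_eq_right)
  also have "\<dots> = f z * (\<Sum>c\<in>L. poly (Pp L c) z / WW L c) - (\<Sum>c\<in>L. f c / WW L c * poly (Pp L c) z)"
    by (simp add: sum_distrib_left sum_subtractf[symmetric] diff_divide_distrib algebra_simps)
  also have "\<dots> = f z - poly (Pl f L) z"
    unfolding partition_unity[OF fin ne] Pl_def by (simp add: poly_sum)
  finally show ?thesis by simp
qed

lemma Pl_nodes:
  assumes fin: "finite L" and ne: "L \<noteq> {}" and c: "c \<in> L"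
  shows "poly (Pl f L) c = f c"
  using key_identity[OF fin ne, of f c] poly_Om_split[OF fin c, of c] by simp

lemma degree_Pl:
  assumes fin: "finite L" and ne: "L \<noteq> {}"
  shows "degree (Pl f L) \<le> card L - 1"
  unfolding Pl_def
proof (rule degree_sum_le[OF fin])
  fix c assume c: "c \<in> L"
  have "degree (Polynomial.smult (f c / WW L c) (Pp L c)) \<le> degree (Pp L c)" by (rule degree_smult_le)
  also have "\<dots> = card L - 1" using degree_Pp[OF fin] c fin by (simp add: card_Diff_singleton)
  finally show "degree (Polynomial.smult (f c / WW L c) (Pp L c)) \<le> card L - 1" .
qed

lemma divdiff_GG:
  assumes fin: "finite L" and ne: "L \<noteq> {}" and t: "t \<notin> L" and ls: "distinct ls" "set ls = L"
  shows "divdiff f (t # ls) = GG f L t"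
proof -
  have om: "(\<Prod>b\<in>L. t - b) \<noteq> 0" using fin t by auto
  have inv: "(\<Sum>c\<in>L. 1 / ((t - c) * WW L c)) = 1 / (\<Prod>b\<in>L. t - b)"
  proof -
    have "(\<Sum>c\<in>L. 1 / ((t - c) * WW L c)) * (\<Prod>b\<in>L. t - b) = (\<Sum>c\<in>L. poly (Pp L c) t / WW L c)"
      unfolding sum_distrib_right
    proof (rule sum.cong[OF refl])
      fix c assume c: "c \<in> L"
      have "(\<Prod>b\<in>L. t - b) = (t - c) * poly (Pp L c) t" using poly_Om_split[OF fin c, of t] poly_Om[OF fin] by simp
      moreover have "t - c \<noteq> 0" using c t by auto
      ultimately show "1 / ((t - c) * WW L c) * (\<Prod>b\<in>L. t - b) = poly (Pp L c) t / WW L c"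
        by simp
    qed
    then show ?thesis using partition_unity[OF fin ne] om by (simp add: field_simps)
  qed
  have "divdiff f (t # ls) = EE f (insert t L)" using divdiff_EE[of "t # ls" f] ls t by simp
  also have "\<dots> = f t / (\<Prod>b\<in>L. t - b) + (\<Sum>b\<in>L. f b / ((b - t) * WW L b))"
    unfolding WW_def by (rule EE_insert[OF fin t])
  also have "\<dots> = GG f L t"
  proof -
    have "GG f L t = (\<Sum>c\<in>L. f t * (1 / ((t - c) * WW L c)) + f c / ((c - t) * WW L c))"
      unfolding GG_def
    proof (rule sum.cong[OF refl])
      fix c assume c: "c \<in> L"
      have tc: "t - c \<noteq> 0" "c - t \<noteq> 0" using c t by auto
      show "divdiff1 f c t / WW L c = f t * (1 / ((t - c) * WW L c)) + f c / ((c - t) * WW L c)"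
        using tc WW_nz[OF fin, of c] t c unfolding divdiff1_def
        by (auto simp: divide_simps, simp add: algebra_simps)
    qed
    also have "\<dots> = f t / (\<Prod>b\<in>L. t - b) + (\<Sum>b\<in>L. f b / ((b - t) * WW L b))"
      unfolding sum.distrib sum_distrib_left[symmetric] inv by simp
    finally show ?thesis by simp
  qed
  finally show ?thesis .
qed


lemma divdiff1_eq: "divdiff1 f c = (\<lambda>z. if z = c then deriv f c else (f z - f c) / (z - c))"
  unfolding divdiff1_def by (rule ext) auto

lemma divdiff1_holo:
  assumes "open S" "f holomorphic_on S"
  shows "divdiff1 f c holomorphic_on S"
  unfolding divdiff1_eq by (rule pole_lemma_open[OF assms(2,1)])

lemma GG_holo:
  assumes S: "open S" and f: "f holomorphic_on S"
  shows "GG f L holomorphic_on S"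
proof -
  have e: "GG f L = (\<lambda>z. \<Sum>c\<in>L. divdiff1 f c z * (1 / WW L c))" unfolding GG_def by (rule ext) simp
  show ?thesis unfolding e
    by (intro holomorphic_on_sum holomorphic_on_mult holomorphic_on_const divdiff1_holo[OF S f])
qed

lemma divdiff_ext_GG:
  assumes S: "open S" and f: "f holomorphic_on S" and ls: "distinct ls" "set ls \<noteq> {}" "set ls \<subseteq> S"
  shows "divdiff_ext f ls = GG f (set ls)"
proof (rule ext)
  fix z
  let ?L = "set ls"
  have fin: "finite ?L" by simp
  show "divdiff_ext f ls z = GG f ?L z"
  proof (cases "z \<in> ?L")
    case False
    then show ?thesis unfolding divdiff_ext_def using divdiff_GG[OF fin ls(2) False ls(1) refl] by simp
  next
    case True
    have zS: "z \<in> S" using True ls by auto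
    have cont: "isCont (GG f ?L) z"
      using GG_holo[OF S f] zS S holomorphic_on_imp_continuous_on continuous_on_eq_continuous_at by blast
    have ev: "eventually (\<lambda>t. GG f ?L t = divdiff f (t # ls)) (at z)"
    proof -
      have "closed (?L - {z})" by (simp add: finite_imp_closed)
      from open_Compl[OF this] have "open (- (?L - {z}))" .
      moreover have "z \<in> - (?L - {z})" by simp
      moreover have "\<forall>t\<in>- (?L - {z}). t \<noteq> z \<longrightarrow> GG f ?L t = divdiff f (t # ls)"
        using divdiff_GG[OF fin ls(2) _ ls(1) refl] by auto
      ultimately show ?thesis unfolding eventually_at_topological by blast
    qed
    have "((\<lambda>t. divdiff f (t # ls)) \<longlongrightarrow> GG f ?L z) (at z)"
      using tendsto_cong[OF ev] cont[unfolded isCont_def] by simp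
    then have "Lim (at z) (\<lambda>t. divdiff f (t # ls)) = GG f ?L z" by (rule tendsto_Lim[rotated]) simp
    then show ?thesis unfolding divdiff_ext_def using True by simp
  qed
qed

lemma order_prod_list: "order a (\<Prod>e\<leftarrow>as. [:-e, 1:]) = count (mset as) (a::complex)"
proof (induction as)
  case Nil then show ?case by (simp add: order_0I)
next
  case (Cons e as)
  have ne: "(\<Prod>e\<leftarrow>as. [:-e, 1:]) \<noteq> 0" by (auto simp: prod_list_zero_iff)
  have "[:-e,1:] * (\<Prod>e\<leftarrow>as. [:-e, 1:]) \<noteq> 0" using ne no_zero_divisors[of "[:-e,1:]"] by fastforce
  from order_mult[OF this, of a] have "order a (\<Prod>e\<leftarrow>e#as. [:-e, 1:]) = order a [:-e,1:] + order a (\<Prod>e\<leftarrow>as. [:-e, 1:])"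
    by simp
  moreover have "order a [:-e,1:] = (if a = e then 1 else 0)"
  proof (cases "a = e")
    case True then show ?thesis using order_power_n_n[of a 1] by simp
  next
    case False
    then have "poly [:-e,1:] a \<noteq> 0" by simp
    from order_0I[OF this] show ?thesis using False by simp
  qed
  ultimately show ?case using Cons by simp
qed

lemma poly_mat_sum_index:
  assumes M: "M \<in> carrier_mat n n" and fin: "finite I" and ij: "i < n" "j < n"
  shows "poly_mat (\<Sum>c\<in>I. p c) M $$ (i,j) = (\<Sum>c\<in>I. poly_mat (p c) M $$ (i,j))"
  using fin
proof (induction I rule: finite_induct)
  case empty then show ?case using M ij by (simp add: poly_mat_zero)
next
  case (insert c I)
  then show ?case using M ij by (simp add: poly_mat_add[OF M])
qed

lemma sum_nth_set: "distinct ls \<Longrightarrow> (\<Sum>i<length ls. g (ls ! i)) = (\<Sum>c\<in>set ls. g c)"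
  by (rule sum.reindex_bij_betw[OF bij_betw_nth]) auto

lemma prod_nth_set: "distinct ls \<Longrightarrow> (\<Prod>i<length ls. g (ls ! i)) = (\<Prod>c\<in>set ls. g c)"
  by (rule prod.reindex_bij_betw[OF bij_betw_nth]) auto


theorem theorem2:
  fixes M :: "complex mat" and w :: "complex vec" and d :: nat
    and f :: "complex \<Rightarrow> complex" and S :: "complex set" and ls :: "complex list"
    and A :: "complex mat" and md :: complex and \<omega> :: "complex \<Rightarrow> complex"
  assumes "0 < d"
    and "M \<in> carrier_mat d d" and "upper_hessenberg M"
    and "w \<in> carrier_vec d"
    and "A = M + mat d d (\<lambda>(i,j). if j = d - 1 then w $ i else 0)"
    and "\<forall>l. eigenvalue A l \<longrightarrow> order l (char_poly A) = 1"
    and "distinct ls" and "set ls = {l. eigenvalue A l}"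
    and "open S" and "f holomorphic_on S"
    and "{l. eigenvalue M l} \<subseteq> S" and "{l. eigenvalue A l} \<subseteq> S"
    and "md = (\<Prod>j<d - 1. M $$ (j + 1, j))"
    and "\<omega> = (\<lambda>z. \<Prod>i<length ls. z - ls ! i)"
  shows "(mat_fun f A *\<^sub>v unit_vec d 0 - mat_fun f M *\<^sub>v unit_vec d 0
           = md \<cdot>\<^sub>v (finsum_vec TYPE(complex) d
               (\<lambda>i. (1 / deriv \<omega> (ls ! i)) \<cdot>\<^sub>v (mat_fun (divdiff1 f (ls ! i)) M *\<^sub>v w))
               {..<length ls}))
      \<and> (mat_fun f A *\<^sub>v unit_vec d 0 - mat_fun f M *\<^sub>v unit_vec d 0
           = md \<cdot>\<^sub>v (mat_fun (divdiff_ext f ls) M *\<^sub>v w))"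
proof -
  note d0 = assms(1) and Mc = assms(2) and H = assms(3) and wc = assms(4) and Adef = assms(5)
    and simple = assms(6) and dist = assms(7) and Ldef = assms(8) and S = assms(9) and f = assms(10)
    and SM = assms(11) and SA = assms(12) and mddef = assms(13) and omdef = assms(14)
  define L where "L = set ls"
  have fin: "finite L" unfolding L_def by simp
  have Ac: "A \<in> carrier_mat d d" using Adef Mc by auto
  obtain as where as: "char_poly A = (\<Prod>a\<leftarrow>as. [:- a, 1:])" "length as = d"
    using char_poly_factorized[OF Ac] by auto
  have eigA: "eigenvalue A l \<longleftrightarrow> poly (char_poly A) l = 0" for l
    by (rule eigenvalue_root_char_poly[OF Ac])
  have poly_as: "poly (\<Prod>a\<leftarrow>as. [:- a, 1:]) l = 0 \<longleftrightarrow> l \<in> set as" for l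
    by (simp add: poly_prod_list prod_list_zero_iff o_def image_iff)
  have setas: "set as = L" unfolding L_def Ldef using eigA poly_as as(1) by auto
  have dist_as: "distinct as"
    unfolding distinct_count_atmost_1
  proof
    fix a
    show "count (mset as) a = (if a \<in> set as then 1 else 0)"
    proof (cases "a \<in> set as")
      case True
      then have "eigenvalue A a" using setas Ldef L_def by auto
      then have "order a (char_poly A) = 1" using simple by auto
      then show ?thesis using True as(1) order_prod_list[of a as] by simp
    next
      case False then show ?thesis by (simp add: not_in_iff[symmetric])
    qed
  qed
  have cpA: "char_poly A = Om L"
    unfolding as(1) Om_def setas[symmetric] using prod.distinct_set_conv_list[OF dist_as, of "\<lambda>b. [:- b, 1:]"] by simp
  have cardL: "card L = d" using distinct_card[OF dist_as] setas as(2) by simp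
  have Lne: "L \<noteq> {}" using cardL d0 by auto
  have LS: "L \<subseteq> S" using SA Ldef L_def by auto
  have om: "\<omega> = poly (Om L)"
    unfolding omdef by (rule ext) (simp add: prod_nth_set[OF dist] poly_Om L_def)
  have dom: "deriv \<omega> c = WW L c" if "c \<in> L" for c
    unfolding om by (rule deriv_poly_Om[OF fin that])
  have iA: "interp A f (Pl f L)"
    unfolding interp_def
  proof (intro allI impI)
    fix l j assume l: "eigenvalue A l" and j: "j < order l (char_poly A)"
    then have "j = 0" using simple by auto
    moreover have "l \<in> L" using l Ldef L_def by auto
    ultimately show "poly ((pderiv ^^ j) (Pl f L)) l = (deriv ^^ j) f l"
      using Pl_nodes[OF fin Lne] by simp
  qed
  have fA: "mat_fun f A = poly_mat (Pl f L) A" by (rule mat_fun_eq[OF Ac iA])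
  have "\<forall>c\<in>L. \<exists>p. interp M (divdiff1 f c) p"
    using interp_exists[OF Mc S divdiff1_holo[OF S f] SM] by blast
  then obtain q where q: "\<And>c. c \<in> L \<Longrightarrow> interp M (divdiff1 f c) (q c)" by metis
  define Q where "Q = (\<Sum>c\<in>L. Polynomial.smult (1 / WW L c) (q c))"
  have iQ: "interp M (GG f L) Q"
  proof -
    have "interp M (\<lambda>z. \<Sum>c\<in>L. (\<lambda>z. (1 / WW L c) * divdiff1 f c z) z) Q"
      unfolding Q_def
    proof (rule interp_sum[OF S SM fin])
      fix c assume "c \<in> L"
      show "(\<lambda>z. (1 / WW L c) * divdiff1 f c z) holomorphic_on S"
        by (intro holomorphic_on_mult holomorphic_on_const divdiff1_holo[OF S f])
      show "interp M (\<lambda>z. (1 / WW L c) * divdiff1 f c z) (Polynomial.smult (1 / WW L c) (q c))"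
        by (rule interp_cmult[OF S SM divdiff1_holo[OF S f] q[OF \<open>c \<in> L\<close>]])
    qed
    moreover have "(\<lambda>z. \<Sum>c\<in>L. (\<lambda>z. (1 / WW L c) * divdiff1 f c z) z) = GG f L"
      unfolding GG_def by (rule ext) simp
    ultimately show ?thesis by simp
  qed
  have iF: "interp M f (Pl f L + Om L * Q)"
  proof -
    have "interp M (\<lambda>z. poly (Pl f L) z + poly (Om L) z * GG f L z) (Pl f L + Om L * Q)"
      by (rule interp_add[OF S SM poly_holo _ interp_poly interp_mult_poly[OF S SM GG_holo[OF S f] iQ]])
         (intro holomorphic_intros GG_holo[OF S f])
    note i1 = this
    show ?thesis
    proof (rule interp_cong[OF S SM _ f _ i1])
      show "(\<lambda>z. poly (Pl f L) z + poly (Om L) z * GG f L z) holomorphic_on S"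
        by (intro holomorphic_intros GG_holo[OF S f])
      fix z show "poly (Pl f L) z + poly (Om L) z * GG f L z = f z"
        using key_identity[OF fin Lne, of f z] by simp
    qed
  qed
  have fM: "mat_fun f M = poly_mat (Pl f L + Om L * Q) M" by (rule mat_fun_eq[OF Mc iF])
  have gM: "mat_fun (divdiff_ext f ls) M = poly_mat Q M"
    using divdiff_ext_GG[OF S f dist] Lne LS mat_fun_eq[OF Mc iQ] unfolding L_def by simp
  have dM: "mat_fun (divdiff1 f c) M = poly_mat (q c) M" if "c \<in> L" for c
    by (rule mat_fun_eq[OF Mc q[OF that]])
  define e0 :: "complex vec" where "e0 = unit_vec d 0"
  have e0c: "e0 \<in> carrier_vec d" unfolding e0_def by simp
  define X where "X = poly_mat (Pl f L) M"
  define Y where "Y = poly_mat (Om L) M"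
  define Z where "Z = poly_mat Q M"
  have XYZ: "X \<in> carrier_mat d d" "Y \<in> carrier_mat d d" "Z \<in> carrier_mat d d"
    unfolding X_def Y_def Z_def using Mc by auto
  have degPl: "degree (Pl f L) \<le> d - 1" using degree_Pl[OF fin Lne, of f] cardL by simp
  have h1: "poly_mat (Pl f L) A *\<^sub>v e0 = X *\<^sub>v e0"
  proof -
    have "coeff (Pl f L) d = 0" using degPl d0 by (intro coeff_eq_0) simp
    then have "poly_mat (Pl f L) A *\<^sub>v e0 = X *\<^sub>v e0 + 0 \<cdot>\<^sub>v w"
      using poly_mat_A_e0[OF Mc H wc Adef d0, of "Pl f L"] degPl unfolding X_def e0_def by simp
    also have "\<dots> = X *\<^sub>v e0" by (rule add_zero_smult_vec[OF _ wc]) (use XYZ e0c in auto)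
    finally show ?thesis .
  qed
  have h2: "Y *\<^sub>v e0 + md \<cdot>\<^sub>v w = 0\<^sub>v d"
  proof -
    have "poly_mat (Om L) A *\<^sub>v e0 = Y *\<^sub>v e0 + (1 * md) \<cdot>\<^sub>v w"
      using poly_mat_A_e0[OF Mc H wc Adef d0, of "Om L"] degree_Om[OF fin] coeff_Om[OF fin] cardL mddef
      unfolding Y_def e0_def by simp
    moreover have "poly_mat (Om L) A = 0\<^sub>m d d" unfolding cpA[symmetric] by (rule cayley_hamilton[OF Ac])
    moreover have "0\<^sub>m d d *\<^sub>v e0 = 0\<^sub>v d" by (rule eq_vecI) (use e0c in \<open>auto simp: scalar_prod_def\<close>)
    ultimately show ?thesis using e0c by simp
  qed
  have Ye: "(Y *\<^sub>v e0) $ i = - (md * w $ i)" if "i < d" for i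
    using arg_cong[OF h2, of "\<lambda>v :: complex vec. v $ i"] that wc XYZ by (simp add: eq_neg_iff_add_eq_0)
  have fMe: "(mat_fun f M *\<^sub>v e0) $ i = (X *\<^sub>v e0) $ i - md * (Z *\<^sub>v w) $ i" if i: "i < d" for i
  proof -
    have "mat_fun f M = X + Z * Y"
      unfolding fM X_def Y_def Z_def poly_mat_add[OF Mc] poly_mat_mult[OF Mc, symmetric] by (simp add: mult.commute)
    then have "mat_fun f M *\<^sub>v e0 = X *\<^sub>v e0 + Z *\<^sub>v (Y *\<^sub>v e0)"
      using XYZ e0c by (simp add: add_mult_distrib_mat_vec[of _ d d] assoc_mult_mat_vec[of _ d d _ d])
    then have "(mat_fun f M *\<^sub>v e0) $ i = (X *\<^sub>v e0) $ i + (Z *\<^sub>v (Y *\<^sub>v e0)) $ i"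
      using i XYZ by simp
    also have "(Z *\<^sub>v (Y *\<^sub>v e0)) $ i = (\<Sum>l<d. Z $$ (i,l) * (Y *\<^sub>v e0) $ l)"
      by (rule mult_vec_index[OF XYZ(3) _ i]) (use XYZ e0c in auto)
    also have "\<dots> = - md * (\<Sum>l<d. Z $$ (i,l) * w $ l)"
      by (simp add: Ye sum_distrib_left algebra_simps)
    also have "(\<Sum>l<d. Z $$ (i,l) * w $ l) = (Z *\<^sub>v w) $ i"
      by (rule mult_vec_index[symmetric, OF XYZ(3) wc i])
    finally show ?thesis by simp
  qed
  have LHS: "mat_fun f A *\<^sub>v e0 - mat_fun f M *\<^sub>v e0 = md \<cdot>\<^sub>v (Z *\<^sub>v w)"
  proof (rule eq_vecI)
    fix i assume "i < dim_vec (md \<cdot>\<^sub>v (Z *\<^sub>v w))"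
    then have i: "i < d" using XYZ by simp
    have fMc: "mat_fun f M \<in> carrier_mat d d" unfolding fM using Mc by simp
    show "(mat_fun f A *\<^sub>v e0 - mat_fun f M *\<^sub>v e0) $ i = (md \<cdot>\<^sub>v (Z *\<^sub>v w)) $ i"
      using i fMc XYZ wc e0c fMe[OF i] h1 unfolding fA by simp
  qed (use XYZ Mc fM in simp)
  have RHS1: "finsum_vec TYPE(complex) d
               (\<lambda>i. (1 / deriv \<omega> (ls ! i)) \<cdot>\<^sub>v (mat_fun (divdiff1 f (ls ! i)) M *\<^sub>v w))
               {..<length ls} = Z *\<^sub>v w"
  proof (rule eq_vecI)
    have car: "(\<lambda>i. (1 / deriv \<omega> (ls ! i)) \<cdot>\<^sub>v (mat_fun (divdiff1 f (ls ! i)) M *\<^sub>v w)) \<in> {..<length ls} \<rightarrow> carrier_vec d"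
      using dM Mc wc mult_mat_vec_carrier[OF poly_mat_carrier[OF Mc] wc] unfolding L_def by auto
    fix i assume "i < dim_vec (Z *\<^sub>v w)"
    then have i: "i < d" using XYZ by simp
    have "finsum_vec TYPE(complex) d
               (\<lambda>i. (1 / deriv \<omega> (ls ! i)) \<cdot>\<^sub>v (mat_fun (divdiff1 f (ls ! i)) M *\<^sub>v w))
               {..<length ls} $ i
        = (\<Sum>k<length ls. ((1 / deriv \<omega> (ls ! k)) \<cdot>\<^sub>v (mat_fun (divdiff1 f (ls ! k)) M *\<^sub>v w)) $ i)"
      by (rule index_finsum_vec[OF _ i car]) simp
    also have "\<dots> = (\<Sum>c\<in>L. ((1 / deriv \<omega> c) \<cdot>\<^sub>v (mat_fun (divdiff1 f c) M *\<^sub>v w)) $ i)"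
      unfolding L_def by (rule sum_nth_set[OF dist])
    also have "\<dots> = (\<Sum>c\<in>L. (1 / WW L c) * (\<Sum>l<d. poly_mat (q c) M $$ (i,l) * w $ l))"
      by (rule sum.cong[OF refl]) (use i Mc wc dM dom mult_vec_index[OF _ wc i] in auto)
    also have "\<dots> = (\<Sum>l<d. (\<Sum>c\<in>L. (1 / WW L c) * poly_mat (q c) M $$ (i,l)) * w $ l)"
      by (simp add: sum_distrib_left sum_distrib_right sum.swap[of _ L] algebra_simps)
    also have "\<dots> = (\<Sum>l<d. Z $$ (i,l) * w $ l)"
    proof (rule sum.cong[OF refl])
      fix l assume "l \<in> {..<d}"
      then have l: "l < d" by simp
      have "Z $$ (i,l) = (\<Sum>c\<in>L. poly_mat (Polynomial.smult (1 / WW L c) (q c)) M $$ (i,l))"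
        unfolding Z_def Q_def by (rule poly_mat_sum_index[OF Mc fin i l])
      also have "\<dots> = (\<Sum>c\<in>L. (1 / WW L c) * poly_mat (q c) M $$ (i,l))"
        using Mc i l by (simp add: poly_mat_smult[OF Mc])
      finally show "(\<Sum>c\<in>L. (1 / WW L c) * poly_mat (q c) M $$ (i,l)) * w $ l = Z $$ (i,l) * w $ l" by simp
    qed
    also have "\<dots> = (Z *\<^sub>v w) $ i" by (rule mult_vec_index[symmetric, OF XYZ(3) wc i])
    finally show "finsum_vec TYPE(complex) d
               (\<lambda>i. (1 / deriv \<omega> (ls ! i)) \<cdot>\<^sub>v (mat_fun (divdiff1 f (ls ! i)) M *\<^sub>v w))
               {..<length ls} $ i = (Z *\<^sub>v w) $ i" .
  next
    have car: "(\<lambda>i. (1 / deriv \<omega> (ls ! i)) \<cdot>\<^sub>v (mat_fun (divdiff1 f (ls ! i)) M *\<^sub>v w)) \<in> {..<length ls} \<rightarrow> carrier_vec d"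
      using dM Mc wc mult_mat_vec_carrier[OF poly_mat_carrier[OF Mc] wc] unfolding L_def by auto
    show "dim_vec (finsum_vec TYPE(complex) d
               (\<lambda>i. (1 / deriv \<omega> (ls ! i)) \<cdot>\<^sub>v (mat_fun (divdiff1 f (ls ! i)) M *\<^sub>v w))
               {..<length ls}) = dim_vec (Z *\<^sub>v w)"
      using finsum_vec_closed[OF car] XYZ by simp
  qed
  show ?thesis using LHS RHS1 gM unfolding e0_def Z_def by simp
qed

end
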